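(* Let $(G,\mathbf p)$ be a framework (with $\mathbf p$ pinned) such that $\dim(K)=1$, and let $k\ge1$ be an integer. If $(G,\mathbf p)$ has a $(1,k)$-flex, then it has a $(1,k)$-flex of the form $$\mathbf p(t)=\mathbf p+\mathbf p't+\mathbf p''t^2+\cdots+\mathbf p^{(k)}t^k$$ (a polynomial in $t$ with configuration coefficients $\mathbf p',\dots,\mathbf p^{(k)}$) with $\mathbf p^{(l)}\in\overline K$ for all $2\le l\le k$.
   Context: Fix a dimension $d$. A configuration is $\mathbf p=(\mathbf p_1,\dots,\mathbf p_n)$, $\mathbf p_i\in\mathbb R^d$; a framework $(G,\mathbf p)$ consists of a graph $G$ on $\{1,\dots,n\}$ and a configuration with $\mathbf p_i\ne\mathbf p_j$ on edges. A configuration $\mathbf q$ is in $\ell$-pinned position if $\mathbf q_1=0$ and, for $2\le i\le\ell+1$, $\mathbf q_i\in\mathrm{span}(e_1,\dots,e_{i-1})$; these form the $\ell$-pinned configuration space. If $\mathbf p$ has $\ell$-dimensional affine span, it is pinned if $\mathbf p_1,\dots,\mathbf p_{\ell+1}$ are affinely independent and $\mathbf p$ is in $\ell$-pinned position. All trajectories and flexes are $\ell$-pinned. A trajectory at $\mathbf p$ is an analytic non-constant map $t\mapsto\mathbf p(t)$ into $\ell$-pinned configuration space, $t\in[0,\varepsilon]$, $\mathbf p(0)=\mathbf p$. A $C^k$ function $\varphi(t)$ is $k$-vanishing if $\varphi^{(i)}(0)=0$ for $1\le i\le k$, and $k$-active if $(k-1)$-vanishing but not $k$-vanishing. With $\mathbf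 m(\mathbf q)=(|\mathbf q_i-\mathbf q_j|^2)_{ij\in E(G)}$, a $(j,k)$-flex is a $j$-active trajectory at $\mathbf p$ with $\mathbf m(\mathbf p(t))$ $k$-vanishing. $K$ is the linear space of $\ell$-pinned $\mathbf p'$ with $(\mathbf p_v-\mathbf p_w)\cdot(\mathbf p'_v-\mathbf p'_w)=0$ for all edges $vw$, and $\overline K$ is a fixed complementary linear subspace of $K$ in $\ell$-pinned configuration space. *)

theory Defs
  imports "HOL-Analysis.Analysis"
begin

text \<open>Vertices are the elements of a finite linearly ordered type 'n (vertex number
i in the paper = the vertex of rank i-1); coordinates of R^d are the elements of a finite
linearly ordered type 'd (basis vector e_i = axis of the coordinate of rank i-1).\<close>

definition vrank :: "'a::{finite,linorder} \<Rightarrow> nat" where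
  "vrank v = card {u. u < v}"

definition pinned_pos :: "nat \<Rightarrow> real^'d::{finite,linorder}^'n::{finite,linorder} \<Rightarrow> bool" where
  "pinned_pos l q \<longleftrightarrow>
     (\<forall>v. vrank v = 0 \<longrightarrow> q $ v = 0) \<and>
     (\<forall>v. 1 \<le> vrank v \<and> vrank v \<le> l \<longrightarrow>
          q $ v \<in> span {axis c 1 | c. vrank c < vrank v})"

definition pinned_space :: "nat \<Rightarrow> (real^'d::{finite,linorder}^'n::{finite,linorder}) set" where
  "pinned_space l = {q. pinned_pos l q}"

definition pinned_config :: "nat \<Rightarrow> real^'d::{finite,linorder}^'n::{finite,linorder} \<Rightarrow> bool" where
  "pinned_config l p \<longleftrightarrow>
     inj_on (\<lambda>v. p $ v) {v. vrank v \<le> l} \<and>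
     \<not> affine_dependent ((\<lambda>v. p $ v) ` {v. vrank v \<le> l}) \<and>
     pinned_pos l p"

definition is_framework :: "('n \<times> 'n) set \<Rightarrow> real^'d^'n \<Rightarrow> bool" where
  "is_framework E p \<longleftrightarrow> (\<forall>(v,w)\<in>E. p $ v \<noteq> p $ w)"

definition real_analytic_on :: "(real \<Rightarrow> 'a::real_normed_vector) \<Rightarrow> real set \<Rightarrow> bool" where
  "real_analytic_on f S \<longleftrightarrow>
     (\<forall>x\<in>S. \<exists>r>0. \<exists>a::nat \<Rightarrow> 'a.
        \<forall>y\<in>S. \<bar>y - x\<bar> < r \<longrightarrow> (\<lambda>i. (y - x) ^ i *\<^sub>R a i) sums f y)"

fun nderiv :: "real set \<Rightarrow> nat \<Rightarrow> (real \<Rightarrow> 'a::real_normed_vector) \<Rightarrow> real \<Rightarrow> 'a" where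
  "nderiv S 0 f = f"
| "nderiv S (Suc i) f = (\<lambda>t. vector_derivative (nderiv S i f) (at t within S))"

definition vanishing :: "real set \<Rightarrow> nat \<Rightarrow> (real \<Rightarrow> 'a::real_normed_vector) \<Rightarrow> bool" where
  "vanishing S k \<phi> \<longleftrightarrow> (\<forall>i. 1 \<le> i \<and> i \<le> k \<longrightarrow> nderiv S i \<phi> 0 = 0)"

definition active :: "real set \<Rightarrow> nat \<Rightarrow> (real \<Rightarrow> 'a::real_normed_vector) \<Rightarrow> bool" where
  "active S k \<phi> \<longleftrightarrow> vanishing S (k - 1) \<phi> \<and> \<not> vanishing S k \<phi>"

definition trajectory :: "nat \<Rightarrow> real^'d::{finite,linorder}^'n::{finite,linorder}
    \<Rightarrow> (real \<Rightarrow> real^'d::{finite,linorder}^'n::{finite,linorder}) \<Rightarrow> real \<Rightarrow> bool" where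
  "trajectory l p f \<epsilon> \<longleftrightarrow>
     \<epsilon> > 0 \<and> real_analytic_on f {0..\<epsilon>} \<and> (\<forall>t\<in>{0..\<epsilon>}. pinned_pos l (f t)) \<and>
     f 0 = p \<and> (\<exists>t\<in>{0..\<epsilon>}. f t \<noteq> p)"

definition flex :: "('n \<times> 'n) set \<Rightarrow> nat \<Rightarrow> real^'d::{finite,linorder}^'n::{finite,linorder}
    \<Rightarrow> nat \<Rightarrow> nat \<Rightarrow> (real \<Rightarrow> real^'d::{finite,linorder}^'n::{finite,linorder}) \<Rightarrow> bool" where
  "flex E l p j k f \<longleftrightarrow>
     (\<exists>\<epsilon>. trajectory l p f \<epsilon> \<and> active {0..\<epsilon>} j f \<and>
        (\<forall>(v,w)\<in>E. vanishing {0..\<epsilon>} k (\<lambda>t. (norm (f t $ v - f t $ w))\<^sup>2)))"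

definition Kspace :: "('n \<times> 'n) set \<Rightarrow> nat \<Rightarrow> real^'d::{finite,linorder}^'n::{finite,linorder}
    \<Rightarrow> (real^'d::{finite,linorder}^'n::{finite,linorder}) set" where
  "Kspace E l p = {p'. pinned_pos l p' \<and> (\<forall>(v,w)\<in>E. (p $ v - p $ w) \<bullet> (p' $ v - p' $ w) = 0)}"

end

theory Submission
  imports Defs "HOL-Computational_Algebra.Polynomial"
begin


lemma diffs_funpow: "(diffs ^^ i) b n = (fact (n+i) / fact n) * (b (n+i) :: real)"
proof (induction i arbitrary: n)
  case 0 then show ?case by simp
next
  case (Suc i)
  have "(diffs ^^ Suc i) b n = of_nat (Suc n) * (diffs ^^ i) b (Suc n)"
    by (simp add: diffs_def)
  also have "\<dots> = of_nat (Suc n) * (fact (Suc n + i) / fact (Suc n) * b (Suc n + i))"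
    using Suc by simp
  also have "\<dots> = fact (n + Suc i) / fact n * b (n + Suc i)"
  proof -
    have e: "Suc n + i = n + Suc i" by simp
    have f: "(fact (Suc n) :: real) = of_nat (Suc n) * fact n" by (simp del: of_nat_Suc)
    show ?thesis unfolding e f by (simp del: of_nat_Suc fact_Suc)
  qed
  finally show ?case .
qed

lemma diffs_funpow0: "(diffs ^^ i) b 0 = fact i * (b i :: real)"
  using diffs_funpow[of i b 0] by simp

lemma scalar_ps:
  fixes \<phi> :: "real \<Rightarrow> real" and b :: "nat \<Rightarrow> real"
  assumes r: "0 < r" "r \<le> \<epsilon>"
    and S: "\<And>y. 0 \<le> y \<Longrightarrow> y < r \<Longrightarrow> (\<lambda>n. b n * y^n) sums \<phi> y"
  shows "nderiv {0..\<epsilon>} i \<phi> 0 = fact i * b i"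
    and "(\<phi> has_vector_derivative b 1) (at 0 within {0..\<epsilon>})"
proof -
  have summ0: "summable (\<lambda>n. b n * x^n)" if "\<bar>x\<bar> < r" for x
  proof -
    define y where "y = (\<bar>x\<bar> + r) / 2"
    have "summable (\<lambda>n. b n * y^n)" using S[of y] that by (auto simp: y_def sums_summable)
    moreover have "norm x < norm y" using that by (auto simp: y_def)
    ultimately show ?thesis by (rule powser_inside)
  qed
  have summ: "summable (\<lambda>n. (diffs ^^ i) b n * x^n)" if "\<bar>x\<bar> < r" for i x
    using that
  proof (induction i arbitrary: x)
    case 0 then show ?case using summ0 by simp
  next
    case (Suc i)
    show ?case using termdiff_converges[of x r "(diffs ^^ i) b"] Suc by simp
  qed
  define P where "P i x = (\<Sum>n. (diffs ^^ i) b n * x^n)" for i x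
  have deriv: "(P i has_field_derivative P (Suc i) x) (at x)" if "\<bar>x\<bar> < r" for i x
    unfolding P_def using termdiffs_strong'[of r "(diffs ^^ i) b" x] summ that by simp
  have eps: "0 < \<epsilon>" using r by simp
  have main: "nderiv {0..\<epsilon>} i \<phi> y = P i y" if "0 \<le> y" "y < r" for i y
    using that
  proof (induction i arbitrary: y)
    case 0 then show ?case using S[of y] by (simp add: P_def sums_iff)
  next
    case (Suc i)
    have d: "(P i has_vector_derivative P (Suc i) y) (at y within {0..\<epsilon>})"
      using deriv[of y i] Suc.prems
      by (simp add: has_real_derivative_iff_has_vector_derivative has_vector_derivative_at_within)
    have "(nderiv {0..\<epsilon>} i \<phi> has_vector_derivative P (Suc i) y) (at y within {0..\<epsilon>})"
    proof (rule has_vector_derivative_transform_within[OF d, of "r - y"])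
      show "0 < r - y" using Suc.prems by simp
      show "y \<in> {0..\<epsilon>}" using Suc.prems r by simp
      fix x' assume "x' \<in> {0..\<epsilon>}" "dist x' y < r - y"
      then show "P i x' = nderiv {0..\<epsilon>} i \<phi> x'"
        using Suc.IH[of x'] by (auto simp: dist_real_def)
    qed
    then show ?case
      using vector_derivative_within_closed_interval[OF eps, of y] Suc.prems r by simp
  qed
  show "nderiv {0..\<epsilon>} i \<phi> 0 = fact i * b i"
    using main[of 0 i] r by (simp add: P_def diffs_funpow0)
  have d: "(P 0 has_vector_derivative P 1 0) (at 0 within {0..\<epsilon>})"
    using deriv[of 0 0] r
    by (simp add: has_real_derivative_iff_has_vector_derivative has_vector_derivative_at_within)
  have "(\<phi> has_vector_derivative P 1 0) (at 0 within {0..\<epsilon>})"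
  proof (rule has_vector_derivative_transform_within[OF d, of r])
    show "0 < r" "0 \<in> {0..\<epsilon>}" using r by auto
    fix x' assume "x' \<in> {0..\<epsilon>}" "dist x' 0 < r"
    then show "P 0 x' = \<phi> x'" using main[of x' 0] by (auto simp: dist_real_def)
  qed
  moreover have "P 1 0 = b 1" by (simp add: P_def diffs_def)
  ultimately show "(\<phi> has_vector_derivative b 1) (at 0 within {0..\<epsilon>})" by simp
qed



definition Bv :: "'n \<Rightarrow> 'n \<Rightarrow> real^'d^'n \<Rightarrow> real^'d^'n \<Rightarrow> real" where
  "Bv v w x y = (x $ v - x $ w) \<bullet> (y $ v - y $ w)"

lemma axis2_nth: "(axis v (axis c 1) :: real^'d^'n) $ i $ j = (if v = i then (if c = j then 1 else 0) else 0)"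
  by (simp add: axis_def)

lemma vec2_expand: "(x :: real^'d^'n) = (\<Sum>v\<in>UNIV. \<Sum>c\<in>UNIV. (x $ v $ c) *\<^sub>R axis v (axis c 1))"
proof -
  have "(\<Sum>v\<in>UNIV. \<Sum>c\<in>UNIV. (x $ v $ c) * ((axis v (axis c 1) :: real^'d^'n) $ i $ j)) = x $ i $ j" for i j
  proof -
    have "(\<Sum>v\<in>UNIV. \<Sum>c\<in>UNIV. (x $ v $ c) * ((axis v (axis c 1) :: real^'d^'n) $ i $ j))
       = (\<Sum>v\<in>UNIV. if v = i then (\<Sum>c\<in>UNIV. (x $ v $ c) * (if c = j then 1 else 0)) else 0)"
      by (rule sum.cong) (auto simp: axis2_nth)
    also have "\<dots> = x $ i $ j" by (simp add: if_distrib[of "\<lambda>u. _ * u"] cong: if_cong)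
    finally show ?thesis .
  qed
  then show ?thesis by (simp add: vec_eq_iff)
qed

lemma core_comp:
  fixes F :: "real \<Rightarrow> real^'d^'n" and A :: "nat \<Rightarrow> real^'d^'n"
  assumes r: "0 < r" "r \<le> \<epsilon>"
    and S: "\<And>y. 0 \<le> y \<Longrightarrow> y < r \<Longrightarrow> (\<lambda>i. y^i *\<^sub>R A i) sums F y"
    and y: "0 \<le> y" "y < r"
  shows "(\<lambda>i. (A i $ v $ c) * y^i) sums (F y $ v $ c)"
proof -
  from bounded_linear.sums[OF bounded_linear_vec_nth[of c], OF bounded_linear.sums[OF bounded_linear_vec_nth[of v], OF S[OF y]]]
  show "(\<lambda>i. (A i $ v $ c) * y^i) sums (F y $ v $ c)" by (simp add: mult.commute)
qed

lemma core:
  fixes F :: "real \<Rightarrow> real^'d^'n" and A :: "nat \<Rightarrow> real^'d^'n"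
  assumes r: "0 < r" "r \<le> \<epsilon>"
    and S: "\<And>y. 0 \<le> y \<Longrightarrow> y < r \<Longrightarrow> (\<lambda>i. y^i *\<^sub>R A i) sums F y"
  shows core_nd: "nderiv {0..\<epsilon>} i (\<lambda>t. F t $ v $ c) 0 = fact i * (A i $ v $ c)"
    and core_d1: "nderiv {0..\<epsilon>} 1 F 0 = A 1"
    and core_meas: "nderiv {0..\<epsilon>} n (\<lambda>t. (norm (F t $ v - F t $ w))\<^sup>2) 0
          = fact n * (\<Sum>i\<le>n. Bv v w (A i) (A (n - i)))"
    and core_0: "F 0 = A 0"
proof -
  have cs: "(\<lambda>i. (A i $ v $ c) * y^i) sums (F y $ v $ c)" if "0 \<le> y" "y < r" for y v c
    by (rule core_comp[OF r S that])
  show "nderiv {0..\<epsilon>} i (\<lambda>t. F t $ v $ c) 0 = fact i * (A i $ v $ c)" for v c i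
    using scalar_ps(1)[OF r cs] .
  have dc: "((\<lambda>t. F t $ v $ c) has_vector_derivative (A 1 $ v $ c)) (at 0 within {0..\<epsilon>})" for v c
    using scalar_ps(2)[OF r cs] .
  have "((\<lambda>t. \<Sum>v\<in>UNIV. \<Sum>c\<in>UNIV. (F t $ v $ c) *\<^sub>R axis v (axis c 1)) has_vector_derivative
         (\<Sum>v\<in>UNIV. \<Sum>c\<in>UNIV. (A 1 $ v $ c) *\<^sub>R axis v (axis c 1))) (at 0 within {0..\<epsilon>})"
    apply (intro has_vector_derivative_sum)
    apply (rule has_vector_derivative_scaleR[where g="\<lambda>_. _", THEN has_vector_derivative_eq_rhs])
      apply (rule dc[unfolded has_real_derivative_iff_has_vector_derivative[symmetric]])
     apply (rule has_vector_derivative_const)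
    apply simp
    done
  moreover have E1: "F = (\<lambda>t. \<Sum>v\<in>UNIV. \<Sum>c\<in>UNIV. (F t $ v $ c) *\<^sub>R axis v (axis c 1))"
    by (rule ext) (rule vec2_expand)
  moreover have E2: "A 1 = (\<Sum>v\<in>UNIV. \<Sum>c\<in>UNIV. (A 1 $ v $ c) *\<^sub>R axis v (axis c 1))"
    by (rule vec2_expand)
  ultimately have "(F has_vector_derivative A 1) (at 0 within {0..\<epsilon>})"
    apply (subst E1, subst E2) by assumption
  then show "nderiv {0..\<epsilon>} 1 F 0 = A 1"
    using vector_derivative_within_closed_interval[of 0 \<epsilon> 0] r by simp
  show "F 0 = A 0"
  proof -
    have "(\<lambda>i. 0^i *\<^sub>R A i) sums F 0" using S[of 0] r by simp
    moreover have "(\<lambda>i. (0::real)^i *\<^sub>R A i) sums A 0"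
    proof -
      have "(\<lambda>i. (0::real)^i *\<^sub>R A i) sums (\<Sum>i\<in>{0}. (0::real)^i *\<^sub>R A i)"
        by (rule sums_finite) auto
      then show ?thesis by simp
    qed
    ultimately show ?thesis using sums_unique2 by blast
  qed
  define d where "d c i = A i $ v $ c - A i $ w $ c" for c i
  have ds: "(\<lambda>i. d c i * y^i) sums (F y $ v $ c - F y $ w $ c)" if "0 \<le> y" "y < r" for c y
    using sums_diff[OF cs[OF that, of v c] cs[OF that, of w c]] by (simp add: d_def algebra_simps)
  have sq: "(\<lambda>k. (\<Sum>i\<le>k. d c i * d c (k - i)) * y^k) sums ((F y $ v $ c - F y $ w $ c) * (F y $ v $ c - F y $ w $ c))"
    if y: "0 \<le> y" "y < r" for c y
  proof -
    define z where "z = (y + r) / 2"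
    have z: "0 \<le> z" "z < r" "norm y < norm z" using y by (auto simp: z_def)
    have as: "summable (\<lambda>k. norm (d c k * y^k))"
      using powser_insidea[OF sums_summable[OF ds[OF z(1,2)]] z(3)] .
    have "(\<lambda>k. \<Sum>i\<le>k. (d c i * y^i) * (d c (k - i) * y^(k-i))) sums
          ((\<Sum>k. d c k * y^k) * (\<Sum>k. d c k * y^k))"
      by (rule Cauchy_product_sums[OF as as])
    moreover have "(\<Sum>k. d c k * y^k) = F y $ v $ c - F y $ w $ c" using ds[OF y] by (simp add: sums_iff)
    moreover have "(\<Sum>i\<le>k. (d c i * y^i) * (d c (k - i) * y^(k-i))) = (\<Sum>i\<le>k. d c i * d c (k - i)) * y^k" for k
      unfolding sum_distrib_right
    proof (rule sum.cong[OF refl])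
      fix i assume "i \<in> {..k}"
      then have "y^i * y^(k-i) = y^k" by (simp flip: power_add)
      then show "d c i * y ^ i * (d c (k - i) * y ^ (k - i)) = d c i * d c (k - i) * y ^ k"
        by (metis mult.assoc mult.left_commute)
    qed
    ultimately show ?thesis by simp
  qed
  have tot: "(\<lambda>k. (\<Sum>i\<le>k. Bv v w (A i) (A (k - i))) * y^k) sums (norm (F y $ v - F y $ w))\<^sup>2"
    if y: "0 \<le> y" "y < r" for y
  proof -
    have "(\<lambda>k. \<Sum>c\<in>UNIV. (\<Sum>i\<le>k. d c i * d c (k - i)) * y^k) sums
          (\<Sum>c\<in>UNIV. (F y $ v $ c - F y $ w $ c) * (F y $ v $ c - F y $ w $ c))"
      by (rule sums_sum) (rule sq[OF y])
    moreover have "(\<Sum>c\<in>UNIV. (F y $ v $ c - F y $ w $ c) * (F y $ v $ c - F y $ w $ c)) = (norm (F y $ v - F y $ w))\<^sup>2"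
      by (simp add: power2_norm_eq_inner inner_vec_def)
    moreover have "(\<Sum>c\<in>UNIV. (\<Sum>i\<le>k. d c i * d c (k - i)) * y^k) = (\<Sum>i\<le>k. Bv v w (A i) (A (k - i))) * y^k" for k
      by (simp add: Bv_def inner_vec_def d_def sum_distrib_right flip: sum.swap[of _ UNIV])
    ultimately show ?thesis by simp
  qed
  show "nderiv {0..\<epsilon>} n (\<lambda>t. (norm (F t $ v - F t $ w))\<^sup>2) 0
          = fact n * (\<Sum>i\<le>n. Bv v w (A i) (A (n - i)))"
    using scalar_ps(1)[OF r tot] .
qed



lemma span_axis:
  fixes x :: "real^'d"
  shows "x \<in> span {axis c 1 | c. P c} \<longleftrightarrow> (\<forall>c. \<not> P c \<longrightarrow> x $ c = 0)"
proof
  assume "x \<in> span {axis c 1 | c. P c}"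
  moreover have "span {axis c 1 | c. P c} \<subseteq> {x :: real^'d. \<forall>c. \<not> P c \<longrightarrow> x $ c = 0}"
  proof -
    have "{axis c 1 | c. P c} \<subseteq> {x :: real^'d. \<forall>c. \<not> P c \<longrightarrow> x $ c = 0}"
      by (auto simp: axis_def)
    moreover have "subspace {x :: real^'d. \<forall>c. \<not> P c \<longrightarrow> x $ c = 0}"
      by (auto simp: subspace_def)
    ultimately show ?thesis by (rule span_minimal)
  qed
  ultimately show "\<forall>c. \<not> P c \<longrightarrow> x $ c = 0" by blast
next
  assume h: "\<forall>c. \<not> P c \<longrightarrow> x $ c = 0"
  have "x = (\<Sum>c\<in>{c. P c}. x $ c *\<^sub>R axis c 1)"
  proof (subst vec_eq_iff, intro allI)
    fix i
    have "(\<Sum>c\<in>{c. P c}. x $ c *\<^sub>R axis c (1::real)) $ i = (\<Sum>c\<in>{c. P c}. if c = i then x $ c else 0)"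
      unfolding sum_component by (rule sum.cong) (auto simp: axis_def)
    also have "\<dots> = x $ i" using h by (auto simp: sum.delta')
    finally show "x $ i = (\<Sum>c\<in>{c. P c}. x $ c *\<^sub>R axis c 1) $ i" by simp
  qed
  also have "\<dots> \<in> span {axis c 1 | c. P c}"
    by (intro span_sum span_scale span_base) auto
  finally show "x \<in> span {axis c 1 | c. P c}" .
qed

lemma pinned_char:
  "pinned_pos l (q :: real^'d::{finite,linorder}^'n::{finite,linorder}) \<longleftrightarrow>
     (\<forall>v c. vrank v \<le> l \<and> vrank v \<le> vrank c \<longrightarrow> q $ v $ c = 0)"
proof -
  have "pinned_pos l q \<longleftrightarrow> (\<forall>v. vrank v = 0 \<longrightarrow> (\<forall>c. q $ v $ c = 0)) \<and>
     (\<forall>v. 1 \<le> vrank v \<and> vrank v \<le> l \<longrightarrow> (\<forall>c. \<not> vrank c < vrank v \<longrightarrow> q $ v $ c = 0))"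
    unfolding pinned_pos_def span_axis by (simp add: vec_eq_iff)
  also have "\<dots> \<longleftrightarrow> (\<forall>v c. vrank v \<le> l \<and> vrank v \<le> vrank c \<longrightarrow> q $ v $ c = 0)"
    apply (auto simp: not_less)
    subgoal for v c by (cases "vrank v = 0") auto
    done
  finally show ?thesis .
qed

lemma subspace_pinned: "subspace (pinned_space l :: (real^'d::{finite,linorder}^'n::{finite,linorder}) set)"
  unfolding pinned_space_def subspace_def pinned_char by auto

lemma Kspace_edge:
  assumes "x \<in> Kspace E l p" "(v, w) \<in> E"
  shows "(p $ v - p $ w) \<bullet> (x $ v - x $ w) = 0"
proof -
  have "\<forall>(v,w)\<in>E. (p $ v - p $ w) \<bullet> (x $ v - x $ w) = 0" using assms(1) by (simp add: Kspace_def)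
  from bspec[OF this assms(2)] show ?thesis by simp
qed

lemma subspace_Kspace: "subspace (Kspace E l p :: (real^'d::{finite,linorder}^'n::{finite,linorder}) set)"
proof -
  have a: "(p $ v - p $ w) \<bullet> ((x + y) $ v - (x + y) $ w) =
      (p $ v - p $ w) \<bullet> (x $ v - x $ w) + (p $ v - p $ w) \<bullet> (y $ v - y $ w)" for x y :: "real^'d::{finite,linorder}^'n::{finite,linorder}" and v w
    by (simp add: inner_add_right inner_diff_right)
  have b: "(p $ v - p $ w) \<bullet> ((u *\<^sub>R x) $ v - (u *\<^sub>R x) $ w) =
      u * ((p $ v - p $ w) \<bullet> (x $ v - x $ w))" for x :: "real^'d::{finite,linorder}^'n::{finite,linorder}" and u v w
    by (simp add: inner_diff_right right_diff_distrib)
  have s: "subspace (pinned_space l :: (real^'d::{finite,linorder}^'n::{finite,linorder}) set)" by (rule subspace_pinned)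
  show ?thesis
    unfolding subspace_def
  proof (intro conjI ballI allI)
    show "0 \<in> Kspace E l p" using subspace_0[OF s] by (auto simp: Kspace_def pinned_space_def)
  next
    fix x y assume hx: "x \<in> Kspace E l p" and hy: "y \<in> Kspace E l p"
    have "pinned_pos l (x + y)" using subspace_add[OF s, of x y] hx hy
      by (simp add: Kspace_def pinned_space_def)
    moreover have "(p $ v - p $ w) \<bullet> ((x + y) $ v - (x + y) $ w) = 0" if "(v, w) \<in> E" for v w
      unfolding a using Kspace_edge[OF hx that] Kspace_edge[OF hy that] by simp
    ultimately show "x + y \<in> Kspace E l p" by (auto simp: Kspace_def)
  next
    fix u x assume hx: "x \<in> Kspace E l p"
    have "pinned_pos l (u *\<^sub>R x)" using subspace_scale[OF s, of x u] hx
      by (simp add: Kspace_def pinned_space_def)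
    moreover have "(p $ v - p $ w) \<bullet> ((u *\<^sub>R x) $ v - (u *\<^sub>R x) $ w) = 0" if "(v, w) \<in> E" for v w
      unfolding b using Kspace_edge[OF hx that] by simp
    ultimately show "u *\<^sub>R x \<in> Kspace E l p" by (auto simp: Kspace_def)
  qed
qed

lemma coef_pinned:
  fixes F :: "real \<Rightarrow> real^'d::{finite,linorder}^'n::{finite,linorder}"
  assumes r: "0 < r" "r \<le> \<epsilon>"
    and S: "\<And>y. 0 \<le> y \<Longrightarrow> y < r \<Longrightarrow> (\<lambda>i. y^i *\<^sub>R A i) sums F y"
    and P: "\<And>y. 0 \<le> y \<Longrightarrow> y < r \<Longrightarrow> pinned_pos l (F y)"
  shows "pinned_pos l (A i)"
  unfolding pinned_char
proof (intro allI impI)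
  fix v :: 'n and c :: 'd assume vc: "vrank v \<le> l \<and> vrank v \<le> vrank c"
  have z: "(\<lambda>n. 0 * y^n) sums (F y $ v $ c)" if "0 \<le> y" "y < r" for y
    using P[OF that] vc by (simp add: pinned_char)
  have "nderiv {0..\<epsilon>} i (\<lambda>t. F t $ v $ c) 0 = fact i * 0"
    using scalar_ps(1)[OF r z] by simp
  moreover have "nderiv {0..\<epsilon>} i (\<lambda>t. F t $ v $ c) 0 = fact i * (A i $ v $ c)"
    by (rule core_nd[OF r S])
  ultimately show "A i $ v $ c = 0" by simp
qed



lemma pcompose_xpow: "pcompose ([:0, 1:] ^ n) s = (s :: real poly) ^ n"
  by (induction n) (simp_all add: pcompose_mult pcompose_1 pcompose_pCons)

lemma pcompose_expand:
  assumes "degree q \<le> N"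
  shows "pcompose q (s :: real poly) = (\<Sum>j\<le>N. smult (coeff q j) (s ^ j))"
proof -
  have "pcompose q s = pcompose (\<Sum>j\<le>N. monom (coeff q j) j) s"
    using poly_as_sum_of_monoms'[OF assms] by simp
  also have "\<dots> = (\<Sum>j\<le>N. smult (coeff q j) (s ^ j))"
    by (simp add: pcompose_sum monom_altdef pcompose_smult pcompose_xpow)
  finally show ?thesis .
qed

lemma coeff_pcompose_expand:
  assumes "degree q \<le> N"
  shows "coeff (pcompose q (s :: real poly)) n = (\<Sum>j\<le>N. coeff q j * coeff (s ^ j) n)"
  by (simp add: pcompose_expand[OF assms] coeff_sum)

lemma spow_low:
  assumes "coeff (s :: real poly) 0 = 0"
  shows "n < j \<Longrightarrow> coeff (s ^ j) n = 0"
proof (induction j arbitrary: n)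
  case 0 then show ?case by simp
next
  case (Suc j)
  have "coeff (s ^ Suc j) n = (\<Sum>i\<le>n. coeff s i * coeff (s ^ j) (n - i))"
    by (simp add: coeff_mult)
  also have "\<dots> = 0"
  proof (rule sum.neutral, intro ballI)
    fix i assume "i \<in> {..n}"
    show "coeff s i * coeff (s ^ j) (n - i) = 0"
    proof (cases "i = 0")
      case True then show ?thesis using assms by simp
    next
      case False
      have "n - i < j" using False Suc.prems \<open>i \<in> {..n}\<close> by auto
      then show ?thesis using Suc.IH by simp
    qed
  qed
  finally show ?case .
qed

lemma compose_low:
  assumes P: "\<And>n. 1 \<le> n \<Longrightarrow> n \<le> k \<Longrightarrow> coeff P n = 0"
    and s: "coeff (s :: real poly) 0 = 0"
    and n: "1 \<le> n" "n \<le> k"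
  shows "coeff (pcompose P s) n = 0"
proof -
  have "coeff (pcompose P s) n = (\<Sum>j\<le>degree P. coeff P j * coeff (s ^ j) n)"
    by (rule coeff_pcompose_expand) simp
  also have "\<dots> = 0"
  proof (rule sum.neutral, intro ballI)
    fix j assume "j \<in> {..degree P}"
    show "coeff P j * coeff (s ^ j) n = 0"
    proof (cases "j = 0")
      case True then show ?thesis using n by simp
    next
      case False
      show ?thesis
      proof (cases "j \<le> k")
        case True then show ?thesis using P[of j] False by simp
      next
        case False then show ?thesis using spow_low[OF s, of n j] n by simp
      qed
    qed
  qed
  finally show ?thesis .
qed

lemma spec_pow:
  fixes \<mu> :: real
  assumes m: "2 \<le> m"
  shows "j \<le> m \<Longrightarrow> coeff (([:0, 1:] + monom \<mu> m) ^ i) j =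
           (if j = i then 1 else 0) + (if i = 1 \<and> j = m then \<mu> else 0)"
proof (induction i arbitrary: j)
  case 0 then show ?case using m by simp
next
  case (Suc i)
  let ?s = "[:0, 1:] + monom \<mu> m"
  have x: "[:0, 1:] * t = pCons 0 t" for t :: "real poly"
    by simp
  have "coeff (?s ^ Suc i) j = coeff (pCons 0 (?s ^ i)) j + coeff (monom \<mu> m * ?s ^ i) j"
    by (simp add: distrib_right x)
  also have "coeff (monom \<mu> m * ?s ^ i) j = (if j = m \<and> i = 0 then \<mu> else 0)"
    using Suc.prems Suc.IH[of 0] m by (auto simp: coeff_monom_mult)
  also have "coeff (pCons 0 (?s ^ i)) j = (if j = Suc i then 1 else 0)"
  proof (cases j)
    case 0 then show ?thesis by simp
  next
    case (Suc j')
    then show ?thesis using Suc.IH[of j'] \<open>j \<le> m\<close> by auto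
  qed
  finally show ?case by auto
qed

lemma coeff_spec_compose:
  fixes \<mu> :: real
  assumes m: "2 \<le> m" and j: "j \<le> m" and N: "degree q \<le> N" "m \<le> N"
  shows "coeff (pcompose q ([:0, 1:] + monom \<mu> m)) j =
           coeff q j + (if j = m then \<mu> * coeff q 1 else 0)"
proof -
  have "coeff (pcompose q ([:0, 1:] + monom \<mu> m)) j
     = (\<Sum>i\<le>N. coeff q i * ((if j = i then 1 else 0) + (if i = 1 \<and> j = m then \<mu> else 0)))"
    unfolding coeff_pcompose_expand[OF N(1)] using spec_pow[OF m j] by simp
  also have "\<dots> = (\<Sum>i\<le>N. coeff q i * (if j = i then 1 else 0)) + (\<Sum>i\<le>N. coeff q i * (if i = 1 \<and> j = m then \<mu> else 0))"
    by (simp add: sum.distrib[symmetric] distrib_left)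
  also have "(\<Sum>i\<le>N. coeff q i * (if j = i then 1 else 0)) = coeff q j"
  proof -
    have "(\<Sum>i\<le>N. coeff q i * (if j = i then 1 else 0)) = (\<Sum>i\<le>N. if i = j then coeff q i else 0)"
      by (rule sum.cong) auto
    then show ?thesis using j N by simp
  qed
  also have "(\<Sum>i\<le>N. coeff q i * (if i = 1 \<and> j = m then \<mu> else 0)) = (if j = m then \<mu> * coeff q 1 else 0)"
  proof -
    have "(\<Sum>i\<le>N. coeff q i * (if i = 1 \<and> j = m then \<mu> else 0)) = (\<Sum>i\<le>N. if i = 1 then (if j = m then \<mu> * coeff q 1 else 0) else 0)"
      by (rule sum.cong) auto
    then show ?thesis using m N by simp
  qed
  finally show ?thesis .
qed



definition vq :: "('n::finite \<Rightarrow> 'd::finite \<Rightarrow> real poly) \<Rightarrow> nat \<Rightarrow> real^'d^'n" where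
  "vq Q i = (\<chi> v. \<chi> c. coeff (Q v c) i)"

definition MeasP :: "'n::finite \<Rightarrow> 'n \<Rightarrow> ('n \<Rightarrow> 'd::finite \<Rightarrow> real poly) \<Rightarrow> real poly" where
  "MeasP v w Q = (\<Sum>c\<in>UNIV. (Q v c - Q w c) * (Q v c - Q w c))"

definition good :: "('n \<times> 'n) set \<Rightarrow> nat \<Rightarrow> (nat \<Rightarrow> real^'d^'n) \<Rightarrow> bool" where
  "good E k A \<longleftrightarrow> (\<forall>(v,w)\<in>E. \<forall>n. 1 \<le> n \<and> n \<le> k \<longrightarrow> (\<Sum>i\<le>n. Bv v w (A i) (A (n - i))) = 0)"

lemma vq_nth [simp]: "vq Q i $ v $ c = coeff (Q v c) i"
  by (simp add: vq_def)

lemma coeff_MeasP: "coeff (MeasP v w Q) n = (\<Sum>i\<le>n. Bv v w (vq Q i) (vq Q (n - i)))"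
  by (simp add: MeasP_def coeff_sum coeff_mult Bv_def inner_vec_def sum_distrib_left
      flip: sum.swap[of _ UNIV])

lemma MeasP_compose: "MeasP v w (\<lambda>v c. pcompose (Q v c) s) = pcompose (MeasP v w Q) s"
  by (simp add: MeasP_def pcompose_sum pcompose_mult pcompose_diff)

lemma good_compose:
  assumes g: "good E k (vq Q)" and s: "coeff s 0 = 0"
  shows "good E k (vq (\<lambda>v c. pcompose (Q v c) s))"
  unfolding good_def
proof (intro ballI allI impI, clarify)
  fix v w n assume e: "(v, w) \<in> E" and n: "1 \<le> n" "n \<le> k"
  have "\<And>n. 1 \<le> n \<Longrightarrow> n \<le> k \<Longrightarrow> coeff (MeasP v w Q) n = 0"
    using g e unfolding good_def coeff_MeasP by auto
  from compose_low[OF this s n]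
  have "coeff (MeasP v w (\<lambda>v c. pcompose (Q v c) s)) n = 0" by (simp add: MeasP_compose)
  then show "(\<Sum>i\<le>n. Bv v w (vq (\<lambda>v c. pcompose (Q v c) s) i) (vq (\<lambda>v c. pcompose (Q v c) s) (n - i))) = 0"
    by (simp add: coeff_MeasP)
qed

definition Nb :: "('n::finite \<Rightarrow> 'd::finite \<Rightarrow> real poly) \<Rightarrow> nat" where
  "Nb Q = (\<Sum>v\<in>UNIV. \<Sum>c\<in>UNIV. degree (Q v c))"

lemma deg_le_Nb: "degree (Q v c) \<le> Nb Q"
proof -
  have "degree (Q v c) \<le> (\<Sum>c\<in>UNIV. degree (Q v c))" by (rule member_le_sum) auto
  also have "\<dots> \<le> Nb Q" unfolding Nb_def by (rule member_le_sum[where f="\<lambda>v. \<Sum>c\<in>UNIV. degree (Q v c)"]) auto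
  finally show ?thesis .
qed

lemma vq_compose:
  assumes "Nb Q \<le> N"
  shows "vq (\<lambda>v c. pcompose (Q v c) s) i = (\<Sum>j\<le>N. coeff (s ^ j) i *\<^sub>R vq Q j)"
proof -
  have "coeff (pcompose (Q v c) s) i = (\<Sum>j\<le>N. coeff (Q v c) j * coeff (s ^ j) i)" for v c
    by (rule coeff_pcompose_expand) (use deg_le_Nb[of Q v c] assms in simp)
  then show ?thesis by (simp add: vec_eq_iff mult.commute)
qed

definition INV where
  "INV PS Kb E k p c1 m Q \<longleftrightarrow> vq Q 0 = p \<and> (\<forall>i. vq Q i \<in> PS) \<and> vq Q 1 = c1 \<and> good E k (vq Q) \<and>
     (\<forall>i. 2 \<le> i \<and> i < m \<longrightarrow> vq Q i \<in> Kb)"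

lemma INV_step:
  assumes PS: "subspace PS" and I: "INV PS Kb E k p c1 m Q" and m: "2 \<le> m"
    and dec: "vq Q m = lam *\<^sub>R c1 + y" "y \<in> Kb"
  shows "\<exists>Q'. INV PS Kb E k p c1 (Suc m) Q'"
proof -
  define s where "s = [:0, 1:] + monom (- lam) m"
  define Q' where "Q' = (\<lambda>v c. pcompose (Q v c) s)"
  define N where "N = Nb Q + m"
  have s0: "coeff s 0 = 0" using m by (simp add: s_def)
  have low: "vq Q' j = vq Q j + (if j = m then (- lam) *\<^sub>R vq Q 1 else 0)" if "j \<le> m" for j
  proof -
    have "coeff (Q' v c) j = coeff (Q v c) j + (if j = m then (- lam) * coeff (Q v c) 1 else 0)" for v c
      unfolding Q'_def s_def
      by (rule coeff_spec_compose[OF m that, where N=N]) (use deg_le_Nb[of Q v c] in \<open>simp_all add: N_def\<close>)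
    then show ?thesis by (simp add: vec_eq_iff)
  qed
  have "vq Q' 0 = p" using low[of 0] I m by (simp add: INV_def)
  moreover have "vq Q' 1 = c1" using low[of 1] I m by (simp add: INV_def)
  moreover have "vq Q' i \<in> PS" for i
  proof -
    have "vq Q' i = (\<Sum>j\<le>N. coeff (s ^ j) i *\<^sub>R vq Q j)"
      unfolding Q'_def by (rule vq_compose) (simp add: N_def)
    also have "\<dots> \<in> PS" using I PS by (auto simp: INV_def intro!: subspace_sum subspace_scale)
    finally show ?thesis .
  qed
  moreover have "good E k (vq Q')" unfolding Q'_def by (rule good_compose[OF _ s0]) (use I in \<open>simp add: INV_def\<close>)
  moreover have "vq Q' i \<in> Kb" if "2 \<le> i" "i < Suc m" for i
  proof (cases "i = m")
    case True
    then have "vq Q' i = y" using low[of m] dec I by (simp add: INV_def)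
    then show ?thesis using dec by simp
  next
    case False
    then show ?thesis using low[of i] that I by (simp add: INV_def)
  qed
  ultimately show ?thesis unfolding INV_def by blast
qed

lemma INV_iter:
  assumes PS: "subspace PS" and I: "INV PS Kb E k p c1 2 Q0"
    and D: "\<And>x. x \<in> PS \<Longrightarrow> \<exists>lam y. x = lam *\<^sub>R c1 + y \<and> y \<in> Kb"
  shows "\<exists>Q. INV PS Kb E k p c1 (2 + d) Q"
proof (induction d)
  case 0 then show ?case using I by auto
next
  case (Suc d)
  then obtain Q where Q: "INV PS Kb E k p c1 (2 + d) Q" by blast
  then have "vq Q (2 + d) \<in> PS" by (simp add: INV_def)
  then obtain lam y where "vq Q (2 + d) = lam *\<^sub>R c1 + y" "y \<in> Kb" using D by blast
  from INV_step[OF PS Q _ this] show ?case by simp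
qed



lemma poly_analytic:
  fixes C :: "nat \<Rightarrow> 'a::real_normed_vector"
  shows "real_analytic_on (\<lambda>y. \<Sum>i\<le>k. y^i *\<^sub>R C i) S"
  unfolding real_analytic_on_def
proof (intro ballI exI conjI allI impI)
  fix x assume "x \<in> S"
  define d where "d j = (\<Sum>i\<le>k. (of_nat (i choose j) * x^(i-j)) *\<^sub>R C i)" for j
  show "(0::real) < 1" by simp
  fix y assume "y \<in> S" "\<bar>y - x\<bar> < 1"
  have "(\<lambda>j. (y - x)^j *\<^sub>R d j) sums (\<Sum>j\<le>k. (y - x)^j *\<^sub>R d j)"
  proof (rule sums_finite)
    fix j assume "j \<notin> {..k}"
    then have "d j = 0" by (auto simp: d_def binomial_eq_0 intro!: sum.neutral)
    then show "(y - x)^j *\<^sub>R d j = 0" by simp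
  qed simp
  moreover have "(\<Sum>j\<le>k. (y - x)^j *\<^sub>R d j) = (\<Sum>i\<le>k. y^i *\<^sub>R C i)"
  proof -
    have "(\<Sum>j\<le>k. (y - x)^j *\<^sub>R d j) = (\<Sum>j\<le>k. \<Sum>i\<le>k. ((y - x)^j * (of_nat (i choose j) * x^(i-j))) *\<^sub>R C i)"
      by (simp add: d_def scaleR_sum_right)
    also have "\<dots> = (\<Sum>i\<le>k. \<Sum>j\<le>k. ((y - x)^j * (of_nat (i choose j) * x^(i-j))) *\<^sub>R C i)"
      by (rule sum.swap)
    also have "\<dots> = (\<Sum>i\<le>k. (\<Sum>j\<le>k. (y - x)^j * (of_nat (i choose j) * x^(i-j))) *\<^sub>R C i)"
      by (simp add: scaleR_sum_left)
    also have "\<dots> = (\<Sum>i\<le>k. y^i *\<^sub>R C i)"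
    proof (rule sum.cong[OF refl])
      fix i assume i: "i \<in> {..k}"
      have "(\<Sum>j\<le>k. (y - x)^j * (of_nat (i choose j) * x^(i-j))) = (\<Sum>j\<le>i. (y - x)^j * (of_nat (i choose j) * x^(i-j)))"
        using i by (intro sum.mono_neutral_right) (auto simp: binomial_eq_0)
      also have "\<dots> = ((y - x) + x)^i"
        using binomial_ring[of "y - x" x i] by (simp add: mult_ac)
      finally show "(\<Sum>j\<le>k. (y - x)^j * (of_nat (i choose j) * x^(i-j))) *\<^sub>R C i = y^i *\<^sub>R C i"
        by simp
    qed
    finally show ?thesis .
  qed
  ultimately show "(\<lambda>j. (y - x)^j *\<^sub>R d j) sums (\<Sum>i\<le>k. y^i *\<^sub>R C i)" by simp
qed

lemma good_edge:
  assumes "good E k A" "(v, w) \<in> E" "1 \<le> n" "n \<le> k"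
  shows "(\<Sum>i\<le>n. Bv v w (A i) (A (n - i))) = 0"
proof -
  have "\<forall>(v,w)\<in>E. \<forall>n. 1 \<le> n \<and> n \<le> k \<longrightarrow> (\<Sum>i\<le>n. Bv v w (A i) (A (n - i))) = 0"
    using assms(1) by (simp add: good_def)
  from bspec[OF this assms(2)] assms(3,4) show ?thesis by simp
qed

lemma sum_atMost_split0: "(\<Sum>i\<le>(k::nat). f i) = f 0 + (\<Sum>i\<in>{1..k}. f i :: 'a::comm_monoid_add)"
proof -
  have "{..k} = insert 0 {1..k}" by (auto simp: not_le)
  then show ?thesis by simp
qed

theorem lemma2p21:
  fixes E :: "('n::{finite,linorder} \<times> 'n) set"
    and p :: "real^'d::{finite,linorder}^'n::{finite,linorder}"
    and l k :: nat
    and Kbar :: "(real^'d::{finite,linorder}^'n::{finite,linorder}) set"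
    and f :: "real \<Rightarrow> real^'d::{finite,linorder}^'n::{finite,linorder}"
  assumes "is_framework E p"
    and "aff_dim (range (\<lambda>v. p $ v)) = int l"
    and "pinned_config l p"
    and "dim (Kspace E l p) = 1"
    and "subspace Kbar" and "Kbar \<subseteq> pinned_space l"
    and "Kspace E l p \<inter> Kbar = {0}"
    and "{x + y | x y. x \<in> Kspace E l p \<and> y \<in> Kbar} = pinned_space l"
    and "k \<ge> 1"
    and "flex E l p 1 k f"
  shows "\<exists>a::nat \<Rightarrow> real^'d::{finite,linorder}^'n::{finite,linorder}.
           flex E l p 1 k (\<lambda>t. p + (\<Sum>i\<in>{1..k}. t ^ i *\<^sub>R a i)) \<and>
           (\<forall>i\<in>{2..k}. a i \<in> Kbar)"
proof -
  note pc = assms(3) and dimK = assms(4) and KbS = assms(6) and decomp = assms(8) and k1 = assms(9)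
  have PS: "subspace (pinned_space l :: (real^'d::{finite,linorder}^'n::{finite,linorder}) set)" by (rule subspace_pinned)
  have pp: "pinned_pos l p" using pc by (simp add: pinned_config_def)
  obtain \<epsilon> where traj: "trajectory l p f \<epsilon>" and act: "active {0..\<epsilon>} 1 f"
    and van: "\<forall>(v,w)\<in>E. vanishing {0..\<epsilon>} k (\<lambda>t. (norm (f t $ v - f t $ w))\<^sup>2)"
    using assms(10) unfolding flex_def by blast
  have eps: "0 < \<epsilon>" and an: "real_analytic_on f {0..\<epsilon>}"
    and fpin: "\<And>t. t \<in> {0..\<epsilon>} \<Longrightarrow> pinned_pos l (f t)" and f0: "f 0 = p"
    using traj unfolding trajectory_def by auto
  obtain r0 A where r0: "r0 > 0" and A0: "\<forall>y\<in>{0..\<epsilon>}. \<bar>y - 0\<bar> < r0 \<longrightarrow> (\<lambda>i. (y - 0)^i *\<^sub>R A i) sums f y"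
    using an eps unfolding real_analytic_on_def by force
  define r where "r = min r0 \<epsilon>"
  have r: "0 < r" "r \<le> \<epsilon>" using r0 eps by (auto simp: r_def)
  have SA: "(\<lambda>i. y^i *\<^sub>R A i) sums f y" if "0 \<le> y" "y < r" for y
    using A0 that by (auto simp: r_def)
  have Ap: "A 0 = p" using core_0[OF r SA] f0 by simp
  have A1: "A 1 \<noteq> 0"
  proof
    assume "A 1 = 0"
    then have "nderiv {0..\<epsilon>} 1 f 0 = 0" using core_d1[OF r SA] by simp
    then have "vanishing {0..\<epsilon>} 1 f" unfolding vanishing_def
      by (metis le_antisym)
    then show False using act by (simp add: active_def)
  qed
  have Apin: "pinned_pos l (A i)" for i
    by (rule coef_pinned[OF r SA]) (use fpin r in auto)
  have Agood: "good E k A" unfolding good_def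
  proof (intro ballI allI impI, clarify)
    fix v w n assume e: "(v, w) \<in> E" and n: "1 \<le> n" "n \<le> k"
    have "vanishing {0..\<epsilon>} k (\<lambda>t. (norm (f t $ v - f t $ w))\<^sup>2)" using van e by auto
    then have "nderiv {0..\<epsilon>} n (\<lambda>t. (norm (f t $ v - f t $ w))\<^sup>2) 0 = 0"
      using n unfolding vanishing_def by blast
    then show "(\<Sum>i\<le>n. Bv v w (A i) (A (n - i))) = 0"
      using core_meas[OF r SA, of n v w] by simp
  qed
  define c1 where "c1 = A 1"
  have c1K: "c1 \<in> Kspace E l p"
    unfolding Kspace_def
  proof (clarsimp, intro conjI ballI)
    show "pinned_pos l c1" using Apin by (simp add: c1_def)
    fix e assume e: "e \<in> E"
    obtain v w where vw: "e = (v, w)" by (cases e)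
    have "(\<Sum>i\<le>1. Bv v w (A i) (A (1 - i))) = 0" using good_edge[OF Agood e[unfolded vw] _ k1] by simp
    then have "2 * ((p $ v - p $ w) \<bullet> (c1 $ v - c1 $ w)) = 0"
      by (simp add: atMost_Suc Bv_def Ap c1_def inner_commute)
    then show "case e of (v, w) \<Rightarrow> (p $ v - p $ w) \<bullet> (c1 $ v - c1 $ w) = 0" using vw by simp
  qed
  have c10: "c1 \<noteq> 0" using A1 by (simp add: c1_def)
  have Kspan: "Kspace E l p \<subseteq> span {c1}"
    by (rule card_ge_dim_independent) (use c1K c10 dimK in \<open>auto simp: dependent_single\<close>)
  have D: "\<exists>lam y. x = lam *\<^sub>R c1 + y \<and> y \<in> Kbar" if hx: "x \<in> pinned_space l" for x
  proof -
    obtain xk y where "x = xk + y" "xk \<in> Kspace E l p" "y \<in> Kbar" using hx decomp by blast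
    moreover from \<open>xk \<in> Kspace E l p\<close> Kspan obtain lam where "xk = lam *\<^sub>R c1"
      by (auto simp: span_singleton)
    ultimately show ?thesis by blast
  qed
  define Q0 where "Q0 v c = (\<Sum>i\<le>k. monom (A i $ v $ c) i)" for v c
  have vQ0: "vq Q0 i = (if i \<le> k then A i else 0)" for i
    by (auto simp: vec_eq_iff Q0_def coeff_sum coeff_monom)
  have I0: "INV (pinned_space l) Kbar E k p c1 2 Q0"
    unfolding INV_def
  proof (intro conjI allI impI)
    show "vq Q0 0 = p" using vQ0 Ap by simp
    show "vq Q0 1 = c1" using vQ0 k1 by (simp add: c1_def)
    show "vq Q0 i \<in> pinned_space l" for i
      using vQ0[of i] Apin[of i] subspace_0[OF PS] by (simp add: pinned_space_def)
    show "good E k (vq Q0)" using Agood unfolding good_def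
    proof (intro ballI allI impI, clarify)
      fix v w n assume e: "(v, w) \<in> E" and n: "1 \<le> n" "n \<le> k"
      have "(\<Sum>i\<le>n. Bv v w (vq Q0 i) (vq Q0 (n - i))) = (\<Sum>i\<le>n. Bv v w (A i) (A (n - i)))"
        using n by (intro sum.cong) (auto simp: vQ0)
      then show "(\<Sum>i\<le>n. Bv v w (vq Q0 i) (vq Q0 (n - i))) = 0"
        using good_edge[OF Agood e] n by auto
    qed
  qed auto
  obtain Q where Q: "INV (pinned_space l) Kbar E k p c1 (2 + (k - 1)) Q"
    using INV_iter[OF PS I0 D] by blast
  define a where "a = vq Q"
  have a0: "a 0 = p" and a1: "a 1 = c1" and apin: "\<And>i. a i \<in> pinned_space l"
    and agood: "good E k a" and aK: "\<And>i. 2 \<le> i \<Longrightarrow> i \<le> k \<Longrightarrow> a i \<in> Kbar"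
    using Q k1 unfolding INV_def a_def by auto
  define G where "G t = p + (\<Sum>i\<in>{1..k}. t ^ i *\<^sub>R a i)" for t
  have Geq: "G t = (\<Sum>i\<le>k. t^i *\<^sub>R a i)" for t
    unfolding G_def sum_atMost_split0[of _ k] using a0 by simp
  define gh where "gh i = (if i \<le> k then a i else 0)" for i
  have SG: "(\<lambda>i. y^i *\<^sub>R gh i) sums G y" if "0 \<le> y" "y < 1" for y
  proof -
    have "(\<lambda>i. y^i *\<^sub>R gh i) sums (\<Sum>i\<in>{..k}. y^i *\<^sub>R gh i)"
      by (rule sums_finite) (auto simp: gh_def)
    moreover have "(\<Sum>i\<in>{..k}. y^i *\<^sub>R gh i) = G y" unfolding Geq by (rule sum.cong) (auto simp: gh_def)
    ultimately show ?thesis by simp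
  qed
  have r1: "(0::real) < 1" "(1::real) \<le> 1" by auto
  have Gd1: "nderiv {0..1} 1 G 0 = c1" using core_d1[OF r1 SG] k1 a1 by (simp add: gh_def)
  have flexG: "flex E l p 1 k G"
    unfolding flex_def
  proof (intro exI conjI)
    show "trajectory l p G 1"
      unfolding trajectory_def
    proof (intro conjI ballI)
      show "(0::real) < 1" by simp
      show "real_analytic_on G {0..1}" unfolding Geq[abs_def] by (rule poly_analytic)
      fix t :: real
      show "pinned_pos l (G t)"
      proof -
        have "G t \<in> pinned_space l" unfolding Geq
          by (intro subspace_sum[OF PS] subspace_scale[OF PS] apin)
        then show ?thesis by (simp add: pinned_space_def)
      qed
    next
      show "G 0 = p" unfolding G_def by (simp add: sum.neutral)
      show "\<exists>t\<in>{0..1}. G t \<noteq> p"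
      proof (rule ccontr)
        assume "\<not> (\<exists>t\<in>{0..1}. G t \<noteq> p)"
        then have c: "\<And>t. t \<in> {0..1} \<Longrightarrow> G t = p" by auto
        have "(G has_vector_derivative 0) (at 0 within {0..1})"
          by (rule has_vector_derivative_transform_within[OF has_vector_derivative_const, of 1])
             (auto simp: c)
        then have "nderiv {0..1} 1 G 0 = 0"
          using vector_derivative_within_closed_interval[of 0 1 0] by simp
        then show False using Gd1 c10 by simp
      qed
    qed
    show "active {0..1} 1 G"
      unfolding active_def vanishing_def using Gd1 c10 by auto
    show "\<forall>(v,w)\<in>E. vanishing {0..1} k (\<lambda>t. (norm (G t $ v - G t $ w))\<^sup>2)"
    proof (clarify)
      fix v w assume e: "(v, w) \<in> E"
      show "vanishing {0..1} k (\<lambda>t. (norm (G t $ v - G t $ w))\<^sup>2)"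
        unfolding vanishing_def
      proof (intro allI impI)
        fix n assume n: "1 \<le> n \<and> n \<le> k"
        have "(\<Sum>i\<le>n. Bv v w (gh i) (gh (n - i))) = (\<Sum>i\<le>n. Bv v w (a i) (a (n - i)))"
          using n by (intro sum.cong) (auto simp: gh_def)
        also have "\<dots> = 0" using good_edge[OF agood e] n by auto
        finally show "nderiv {0..1} n (\<lambda>t. (norm (G t $ v - G t $ w))\<^sup>2) 0 = 0"
          using core_meas[OF r1 SG, of n v w] by simp
      qed
    qed
  qed
  show ?thesis
    by (rule exI[of _ a]) (use flexG aK in \<open>auto simp: G_def[abs_def]\<close>)
qed


end
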